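(* Let $n \geq 1$ and let $\Gamma$ be a group that is the directed union of a directed family $(\Gamma_i)_{i\in I}$ of subgroups which are pairwise isomorphic and $n$-boundedly acyclic. Then $\Gamma$ is $n$-boundedly acyclic.
   Context: A group $G$ is $n$-boundedly acyclic if $\operatorname{H}^i_b(G;\mathbb{R}) \cong 0$ for all $i \in \{1,\dots,n\}$, where $\operatorname{H}^*_b(\cdot;\mathbb{R})$ is bounded cohomology with trivial real coefficients. *)

theory Defs
  imports Complex_Main "HOL-Algebra.Group"
begin

text \<open>Bounded cohomology of a group G with trivial real coefficients, via the
standard inhomogeneous bounded cochain complex: a degree-k cochain is a
function on k-tuples of group elements (represented as lists of length k
with entries in the carrier), bounded on those tuples.\<close>

definition tuples :: "('a, 'b) monoid_scheme \<Rightarrow> nat \<Rightarrow> 'a list set" where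
  "tuples G k = {xs. length xs = k \<and> set xs \<subseteq> carrier G}"

definition bcochain :: "('a, 'b) monoid_scheme \<Rightarrow> nat \<Rightarrow> ('a list \<Rightarrow> real) \<Rightarrow> bool" where
  "bcochain G k f \<longleftrightarrow> (\<exists>C. \<forall>xs \<in> tuples G k. \<bar>f xs\<bar> \<le> C)"

text \<open>Inhomogeneous coboundary from degree k to degree k+1, evaluated at a
(k+1)-tuple xs = (g_1,...,g_{k+1}):
 f(g_2..g_{k+1}) + sum_{i=1}^k (-1)^i f(..,g_i g_{i+1},..) + (-1)^{k+1} f(g_1..g_k).\<close>

definition coboundary :: "('a, 'b) monoid_scheme \<Rightarrow> nat \<Rightarrow> ('a list \<Rightarrow> real) \<Rightarrow> 'a list \<Rightarrow> real" where
  "coboundary G k f xs =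
     f (tl xs)
     + (\<Sum>i<k. (-1) ^ (i + 1) * f (take i xs @ [xs ! i \<otimes>\<^bsub>G\<^esub> xs ! (i + 1)] @ drop (i + 2) xs))
     + (-1) ^ (k + 1) * f (butlast xs)"

definition bounded_cohomology_vanishes :: "('a, 'b) monoid_scheme \<Rightarrow> nat \<Rightarrow> bool" where
  "bounded_cohomology_vanishes G k \<longleftrightarrow>
     (\<forall>f. bcochain G k f \<and> (\<forall>xs \<in> tuples G (k + 1). coboundary G k f xs = 0)
        \<longrightarrow> (\<exists>g. bcochain G (k - 1) g \<and> (\<forall>xs \<in> tuples G k. f xs = coboundary G (k - 1) g xs)))"

definition boundedly_acyclic :: "('a, 'b) monoid_scheme \<Rightarrow> nat \<Rightarrow> bool" where
  "boundedly_acyclic G n \<longleftrightarrow> (\<forall>i \<in> {1..n}. bounded_cohomology_vanishes G i)"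

end

theory Submission
  imports Defs "HOL-Analysis.Analysis"
begin

definition fc :: "('a, 'b) monoid_scheme \<Rightarrow> nat \<Rightarrow> 'a list \<Rightarrow> 'a list" where
  "fc G i xs = (if i = 0 then tl xs else if i = length xs then butlast xs
     else take (i - 1) xs @ [xs ! (i - 1) \<otimes>\<^bsub>G\<^esub> xs ! i] @ drop (i + 1) xs)"

lemma fc_length: "i \<le> length xs \<Longrightarrow> length xs \<ge> 1 \<Longrightarrow> length (fc G i xs) = length xs - 1"
  unfolding fc_def by auto

lemma fc_nth: "i \<le> length xs \<Longrightarrow> p + 1 < length xs \<Longrightarrow>
  fc G i xs ! p = (if i = 0 then xs ! (p + 1) else if p + 1 < i then xs ! p
     else if p + 1 = i then xs ! p \<otimes>\<^bsub>G\<^esub> xs ! (p + 1) else xs ! (p + 1))"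
  unfolding fc_def
  by (auto simp: nth_tl nth_butlast nth_append min_def nth_Cons')

lemma fc_carrier:
  assumes "monoid G" "set xs \<subseteq> carrier G" "i \<le> length xs" "length xs \<ge> 1"
  shows "set (fc G i xs) \<subseteq> carrier G"
proof
  fix y assume "y \<in> set (fc G i xs)"
  then obtain p where p: "p < length (fc G i xs)" "y = fc G i xs ! p" by (auto simp: in_set_conv_nth)
  have "length (fc G i xs) = length xs - 1" by (rule fc_length[OF assms(3,4)])
  then have pl: "p + 1 < length xs" using p(1) by linarith
  have c: "\<And>q. q < length xs \<Longrightarrow> xs ! q \<in> carrier G" using assms(2) nth_mem by blast
  show "y \<in> carrier G" unfolding p(2) fc_nth[OF assms(3) pl]
    using c pl monoid.m_closed[OF assms(1)] by auto
qed

lemma fc_simplicial: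
  assumes G: "monoid G" and xs: "set xs \<subseteq> carrier G" and l: "length xs \<ge> 2"
    and ij: "i < j" "j \<le> length xs"
  shows "fc G i (fc G j xs) = fc G (j - 1) (fc G i xs)"
proof (rule nth_equalityI)
  have l1: "length (fc G j xs) = length xs - 1" by (rule fc_length) (use ij l in auto)
  have l2: "length (fc G i xs) = length xs - 1" by (rule fc_length) (use ij l in auto)
  show "length (fc G i (fc G j xs)) = length (fc G (j - 1) (fc G i xs))"
  proof -
    have "length (fc G i (fc G j xs)) = length (fc G j xs) - 1" by (rule fc_length) (use l1 ij l in auto)
    moreover have "length (fc G (j - 1) (fc G i xs)) = length (fc G i xs) - 1" by (rule fc_length) (use l2 ij l in auto)
    ultimately show ?thesis using l1 l2 by simp
  qed
  have l3: "length (fc G i (fc G j xs)) = length (fc G j xs) - 1" by (rule fc_length) (use l1 ij l in auto)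
  fix p assume "p < length (fc G i (fc G j xs))"
  then have p: "p + 2 < length xs" using l3 l1 ij l by simp
  have c: "\<And>q. q < length xs \<Longrightarrow> xs ! q \<in> carrier G" using xs nth_mem by blast
  have L: "fc G i (fc G j xs) ! p = (if i = 0 then fc G j xs ! (p + 1) else if p + 1 < i then fc G j xs ! p
     else if p + 1 = i then fc G j xs ! p \<otimes>\<^bsub>G\<^esub> fc G j xs ! (p + 1) else fc G j xs ! (p + 1))"
    by (rule fc_nth) (use l1 ij p in auto)
  have R: "fc G (j - 1) (fc G i xs) ! p = (if j - 1 = 0 then fc G i xs ! (p + 1) else if p + 1 < j - 1 then fc G i xs ! p
     else if p + 1 = j - 1 then fc G i xs ! p \<otimes>\<^bsub>G\<^esub> fc G i xs ! (p + 1) else fc G i xs ! (p + 1))"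
    by (rule fc_nth) (use l2 ij p in auto)
  have Nj: "\<And>q. q + 1 < length xs \<Longrightarrow> fc G j xs ! q = (if j = 0 then xs ! (q + 1) else if q + 1 < j then xs ! q
     else if q + 1 = j then xs ! q \<otimes>\<^bsub>G\<^esub> xs ! (q + 1) else xs ! (q + 1))"
    by (rule fc_nth) (use ij in auto)
  have Ni: "\<And>q. q + 1 < length xs \<Longrightarrow> fc G i xs ! q = (if i = 0 then xs ! (q + 1) else if q + 1 < i then xs ! q
     else if q + 1 = i then xs ! q \<otimes>\<^bsub>G\<^esub> xs ! (q + 1) else xs ! (q + 1))"
    by (rule fc_nth) (use ij in auto)
  have A: "fc G i (fc G j xs) ! p = fc G (j - 1) (fc G i xs) ! p"
    unfolding L R using p ij c monoid.m_assoc[OF G] by (auto simp: Nj Ni)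
  then show "fc G i (fc G j xs) ! p = fc G (j - 1) (fc G i xs) ! p" .
qed

lemma cob_sum:
  assumes "length xs = k + 1"
  shows "coboundary G k f xs = (\<Sum>i\<le>k+1. (-1) ^ i * f (fc G i xs))"
proof -
  have t: "(\<Sum>i<k. (-1) ^ (i + 1) * f (take i xs @ [xs ! i \<otimes>\<^bsub>G\<^esub> xs ! (i + 1)] @ drop (i + 2) xs))
     = (\<Sum>i<k. (-1) ^ Suc i * f (fc G (Suc i) xs))"
    by (rule sum.cong) (use assms in \<open>auto simp: fc_def\<close>)
  have "(\<Sum>i\<le>k+1. (-1) ^ i * f (fc G i xs)) = f (fc G 0 xs) + (\<Sum>i\<le>k. (-1) ^ Suc i * f (fc G (Suc i) xs))"
    by (simp only: Suc_eq_plus1[symmetric] sum.atMost_Suc_shift) simp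
  also have "\<dots> = f (fc G 0 xs) + (\<Sum>i<k. (-1) ^ Suc i * f (fc G (Suc i) xs)) + (-1) ^ (k + 1) * f (fc G (k + 1) xs)"
    by (simp add: lessThan_Suc_atMost[symmetric])
  also have "\<dots> = coboundary G k f xs"
    unfolding coboundary_def t using assms by (simp add: fc_def)
  finally show ?thesis by simp
qed

lemma cob_cob:
  assumes G: "monoid G" and xs: "set xs \<subseteq> carrier G" and l: "length xs = k + 2"
  shows "coboundary G (k + 1) (coboundary G k g) xs = 0"
proof -
  define a where "a = (\<lambda>(i::nat, j::nat). (-1) ^ (i + j) * g (fc G i (fc G j xs)) :: real)"
  define P where "P = {..k+1} \<times> {..k+2}"
  define S1 where "S1 = {p \<in> P. fst p < snd p}"
  define S2 where "S2 = {p \<in> P. snd p \<le> fst p}"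
  have "coboundary G (k + 1) (coboundary G k g) xs = (\<Sum>j\<le>k+2. (-1) ^ j * coboundary G k g (fc G j xs))"
    using cob_sum[of xs "k+1"] l by simp
  also have "\<dots> = (\<Sum>j\<le>k+2. \<Sum>i\<le>k+1. a (i, j))"
  proof (rule sum.cong)
    fix j assume j: "j \<in> {..k+2}"
    have "length (fc G j xs) = k + 1" using fc_length[of j xs G] j l by simp
    then show "(-1) ^ j * coboundary G k g (fc G j xs) = (\<Sum>i\<le>k+1. a (i, j))"
      by (simp add: cob_sum a_def sum_distrib_left power_add mult_ac right_diff_distrib)
  qed simp
  also have "\<dots> = (\<Sum>i\<le>k+1. \<Sum>j\<le>k+2. a (i, j))" by (rule sum.swap)
  also have "\<dots> = sum a P"
    unfolding P_def sum.cartesian_product by (simp add: case_prod_eta)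
  also have "P = S1 \<union> S2" unfolding S1_def S2_def by auto
  also have "sum a (S1 \<union> S2) = sum a S1 + sum a S2"
    by (rule sum.union_disjoint) (auto simp: S1_def S2_def P_def)
  also have "sum a S1 = sum (\<lambda>(i, j). a (j, i + 1)) S2"
    by (rule sum.reindex_bij_witness[where j = "\<lambda>(i, j). (j - 1, i)" and i = "\<lambda>(i, j). (j, i + 1)"])
       (auto simp: S1_def S2_def P_def)
  also have "\<dots> = sum (\<lambda>p. - a p) S2"
  proof (rule sum.cong)
    fix p assume p: "p \<in> S2"
    obtain i j where ij: "p = (i, j)" by force
    have "j \<le> i" "i \<le> k + 1" using p ij by (auto simp: S2_def P_def)
    then have "fc G j (fc G (i + 1) xs) = fc G i (fc G j xs)"
      using fc_simplicial[OF G xs, of j "i + 1"] l by simp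
    then show "(\<lambda>(i, j). a (j, i + 1)) p = - a p"
      unfolding ij a_def by (simp add: add_ac)
  qed simp
  finally show ?thesis by (simp add: sum_negf)
qed

definition nb :: "'x set \<Rightarrow> ('x \<Rightarrow> real) \<Rightarrow> real \<Rightarrow> bool" where
  "nb S h c \<longleftrightarrow> (\<forall>s\<in>S. \<bar>h s\<bar> \<le> c)"

lemma small_zero:
  fixes x a :: real
  assumes "\<And>N::nat. \<bar>x\<bar> \<le> a * (1/2) ^ N"
  shows "x = 0"
proof (rule ccontr)
  assume x: "x \<noteq> 0"
  have a: "a > 0" using assms[of 0] x by simp
  obtain N :: nat where "(1/2::real) ^ N < \<bar>x\<bar> / a"
    using real_arch_pow_inv[of "\<bar>x\<bar> / a" "1/2"] x a by auto
  then have "a * (1/2) ^ N < \<bar>x\<bar>" using a by (simp add: field_simps)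
  with assms[of N] show False by simp
qed

locale om =
  fixes D :: "('x \<Rightarrow> real) \<Rightarrow> 'y \<Rightarrow> real" and T :: "'x set" and U :: "'y set"
    and Z :: "('y \<Rightarrow> real) set" and K :: real
  assumes lin: "\<And>g h a b u. u \<in> U \<Longrightarrow> D (\<lambda>t. a * g t + b * h t) u = a * D g u + b * D h u"
  and bnd: "\<And>g c u. nb T g c \<Longrightarrow> u \<in> U \<Longrightarrow> \<bar>D g u\<bar> \<le> K * c"
  and K: "K \<ge> 0"
  and Zlin: "\<And>f h a b. f \<in> Z \<Longrightarrow> h \<in> Z \<Longrightarrow> (\<lambda>u. a * f u + b * h u) \<in> Z"
  and ZD: "\<And>g c. nb T g c \<Longrightarrow> D g \<in> Z"
  and Zlim: "\<And>fs f. (\<forall>j. fs j \<in> Z) \<Longrightarrow> (\<forall>u\<in>U. (\<lambda>j. fs j u) \<longlonglongrightarrow> f u) \<Longrightarrow> (\<exists>c. nb U f c) \<Longrightarrow> f \<in> Z"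
  and surj: "\<And>f. f \<in> Z \<Longrightarrow> (\<exists>c. nb U f c) \<Longrightarrow> \<exists>g c. nb T g c \<and> (\<forall>u\<in>U. D g u = f u)"
begin

lemma D0: "u \<in> U \<Longrightarrow> D (\<lambda>t. 0) u = 0"
  using bnd[of "\<lambda>t. 0" 0 u] by (simp add: nb_def)

lemma Dsub: "u \<in> U \<Longrightarrow> D (\<lambda>t. g t - h t) u = D g u - D h u"
  using lin[of u 1 g "-1" h] by simp

lemma Dadd: "u \<in> U \<Longrightarrow> D (\<lambda>t. g t + h t) u = D g u + D h u"
  using lin[of u 1 g 1 h] by simp

lemma Dscale: "u \<in> U \<Longrightarrow> D (\<lambda>t. a * g t) u = a * D g u"
  using lin[of u a g 0 g] by simp

lemma Zsub: "f \<in> Z \<Longrightarrow> h \<in> Z \<Longrightarrow> (\<lambda>u. f u - h u) \<in> Z"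
  using Zlin[of f h 1 "-1"] by simp

lemma Zadd: "f \<in> Z \<Longrightarrow> h \<in> Z \<Longrightarrow> (\<lambda>u. f u + h u) \<in> Z"
  using Zlin[of f h 1 1] by simp

lemma Zscale: "f \<in> Z \<Longrightarrow> (\<lambda>u. a * f u) \<in> Z"
  using Zlin[of f f a 0] by simp

definition approx :: "real \<Rightarrow> ('y \<Rightarrow> real) \<Rightarrow> bool" where
  "approx m f \<longleftrightarrow> (\<forall>e>0. \<exists>g. nb T g m \<and> nb U (\<lambda>u. f u - D g u) e)"

lemma far:
  assumes NOT: "\<forall>m r. m \<ge> 0 \<longrightarrow> r > 0 \<longrightarrow> (\<exists>f\<in>Z. nb U f r \<and> \<not> approx m f)"
    and S: "S \<in> Z" and r: "r > 0" and m: "m \<ge> 0"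
  shows "\<exists>f\<in>Z. \<exists>e>0. nb U (\<lambda>u. f u - S u) r \<and> (\<forall>g. nb T g m \<longrightarrow> \<not> nb U (\<lambda>u. f u - D g u) e)"
proof -
  obtain f0 where f0: "f0 \<in> Z" "nb U f0 r" "\<not> approx m f0" using NOT r m by blast
  then obtain e where e: "e > 0" "\<And>g. nb T g m \<Longrightarrow> \<not> nb U (\<lambda>u. f0 u - D g u) e"
    unfolding approx_def by blast
  show ?thesis
  proof (cases "\<forall>g. nb T g m \<longrightarrow> \<not> nb U (\<lambda>u. (S u + f0 u) - D g u) e")
    case True
    then show ?thesis using Zadd[OF S f0(1)] e(1) f0(2) by (intro bexI[of _ "\<lambda>u. S u + f0 u"]) auto
  next
    case False
    then obtain g1 where g1: "nb T g1 m" "nb U (\<lambda>u. (S u + f0 u) - D g1 u) e" by blast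
    show ?thesis
    proof (cases "\<forall>g. nb T g m \<longrightarrow> \<not> nb U (\<lambda>u. (S u - f0 u) - D g u) e")
      case True
      then show ?thesis using Zsub[OF S f0(1)] e(1) f0(2)
        by (intro bexI[of _ "\<lambda>u. S u - f0 u"]) (auto simp: nb_def)
    next
      case False
      then obtain g2 where g2: "nb T g2 m" "nb U (\<lambda>u. (S u - f0 u) - D g2 u) e" by blast
      define g where "g = (\<lambda>t. (1/2) * g1 t + (-1/2) * g2 t)"
      have "nb T g m" unfolding nb_def g_def
      proof
        fix t assume "t \<in> T"
        then have "\<bar>g1 t\<bar> \<le> m" "\<bar>g2 t\<bar> \<le> m" using g1(1) g2(1) unfolding nb_def by auto
        then show "\<bar>1 / 2 * g1 t + - 1 / 2 * g2 t\<bar> \<le> m" by (simp add: abs_le_iff)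
      qed
      moreover have "nb U (\<lambda>u. f0 u - D g u) e"
        unfolding nb_def
      proof
        fix u assume u: "u \<in> U"
        have "D g u = (1/2) * D g1 u + (-1/2) * D g2 u" unfolding g_def by (rule lin[OF u])
        moreover have "\<bar>S u + f0 u - D g1 u\<bar> \<le> e" "\<bar>S u - f0 u - D g2 u\<bar> \<le> e"
          using g1(2) g2(2) u unfolding nb_def by auto
        ultimately show "\<bar>f0 u - D g u\<bar> \<le> e" by (simp add: abs_le_iff)
      qed
      ultimately show ?thesis using e by blast
    qed
  qed
qed

lemma nb_mono: "nb S h c \<Longrightarrow> c \<le> c' \<Longrightarrow> nb S h c'"
  unfolding nb_def by force

lemma baire: "\<exists>m r. m \<ge> 0 \<and> r > 0 \<and> (\<forall>f\<in>Z. nb U f r \<longrightarrow> approx m f)"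
proof (rule ccontr)
  assume "\<not> ?thesis"
  then have NOT: "\<forall>m r. m \<ge> 0 \<longrightarrow> r > 0 \<longrightarrow> (\<exists>f\<in>Z. nb U f r \<and> \<not> approx m f)" by auto
  define P where "P S \<rho> (j::nat) f e \<longleftrightarrow> f \<in> Z \<and> e > 0 \<and> nb U (\<lambda>u. f u - S u) \<rho>
      \<and> (\<forall>g. nb T g (real j) \<longrightarrow> \<not> nb U (\<lambda>u. f u - D g u) e)" for S \<rho> j f e
  have "\<forall>S \<rho> j. \<exists>p. (S \<in> Z \<and> \<rho> > 0) \<longrightarrow> P S \<rho> j (fst p) (snd p)"
  proof (intro allI)
    fix S \<rho> j
    show "\<exists>p. (S \<in> Z \<and> \<rho> > 0) \<longrightarrow> P S \<rho> j (fst p) (snd p)"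
    proof (cases "S \<in> Z \<and> \<rho> > 0")
      case True
      then obtain f e where "f \<in> Z" "e > 0" "nb U (\<lambda>u. f u - S u) \<rho>"
         "\<forall>g. nb T g (real j) \<longrightarrow> \<not> nb U (\<lambda>u. f u - D g u) e"
        using far[OF NOT, of S \<rho> "real j"] by auto
      then show ?thesis unfolding P_def by (intro exI[of _ "(f, e)"]) auto
    qed auto
  qed
  then obtain nx where nx: "\<And>S \<rho> j. S \<in> Z \<Longrightarrow> \<rho> > 0 \<Longrightarrow> P S \<rho> j (fst (nx S \<rho> j)) (snd (nx S \<rho> j))"
    by metis
  define seq where "seq = rec_nat (D (\<lambda>t. 0), 1::real)
     (\<lambda>j p. (fst (nx (fst p) (snd p / 2) j), min (snd p / 2) (snd (nx (fst p) (snd p / 2) j) / 2)))"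
  define S where "S j = fst (seq j)" for j
  define \<rho> where "\<rho> j = snd (seq j)" for j
  define E where "E j = snd (nx (S j) (\<rho> j / 2) j)" for j
  have S0: "S 0 = D (\<lambda>t. 0)" and r0: "\<rho> 0 = 1" by (simp_all add: S_def \<rho>_def seq_def)
  have SS: "S (Suc j) = fst (nx (S j) (\<rho> j / 2) j)" for j by (simp add: S_def \<rho>_def seq_def)
  have rS: "\<rho> (Suc j) = min (\<rho> j / 2) (E j / 2)" for j by (simp add: S_def \<rho>_def E_def seq_def)
  have inv: "S j \<in> Z \<and> \<rho> j > 0" for j
  proof (induction j)
    case 0
    then show ?case using ZD[of "\<lambda>t. 0" 0] by (simp add: S0 r0 nb_def)
  next
    case (Suc j)
    then have "P (S j) (\<rho> j / 2) j (S (Suc j)) (E j)" using nx[of "S j" "\<rho> j / 2" j] by (simp add: SS E_def)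
    then show ?case using Suc by (simp add: P_def rS)
  qed
  have Pj: "P (S j) (\<rho> j / 2) j (S (Suc j)) (E j)" for j
    using nx[of "S j" "\<rho> j / 2" j] inv[of j] by (simp add: SS E_def)
  have rle: "\<rho> j \<le> (1/2) ^ j" for j
  proof (induction j)
    case (Suc j) then show ?case using rS[of j] by simp
  qed (simp add: r0)
  have cb: "\<bar>S l u - S j u\<bar> \<le> \<rho> j - \<rho> l" if "u \<in> U" "j \<le> l" for u j l
    using that(2)
  proof (induction l rule: dec_induct)
    case base then show ?case by simp
  next
    case (step l)
    have "\<bar>S (Suc l) u - S l u\<bar> \<le> \<rho> l / 2" using Pj[of l] that(1) by (auto simp: P_def nb_def)
    moreover have "\<rho> (Suc l) \<le> \<rho> l / 2" using rS[of l] by simp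
    ultimately show ?case using step.IH by linarith
  qed
  define F where "F u = lim (\<lambda>l. S l u)" for u
  have conv: "(\<lambda>l. S l u) \<longlonglongrightarrow> F u" if u: "u \<in> U" for u
  proof -
    have "Cauchy (\<lambda>l. S l u)"
    proof (rule CauchyI)
      fix e :: real assume e: "e > 0"
      obtain M :: nat where M: "(1/2::real) ^ M < e / 2" using real_arch_pow_inv[of "e/2" "1/2::real"] e by auto
      show "\<exists>M. \<forall>m\<ge>M. \<forall>n\<ge>M. norm (S m u - S n u) < e"
      proof (intro exI allI impI)
        fix m n assume "M \<le> m" "M \<le> n"
        then have "\<bar>S m u - S M u\<bar> \<le> \<rho> M - \<rho> m" "\<bar>S n u - S M u\<bar> \<le> \<rho> M - \<rho> n"
          using cb u by auto
        moreover have "\<rho> m > 0" "\<rho> n > 0" using inv by auto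
        ultimately show "norm (S m u - S n u) < e" using rle[of M] M by simp
      qed
    qed
    then show ?thesis unfolding F_def using Cauchy_convergent convergent_LIMSEQ_iff by blast
  qed
  have Fb: "\<bar>F u - S j u\<bar> \<le> \<rho> j" if u: "u \<in> U" for u j
  proof -
    have "(\<lambda>l. \<bar>S l u - S j u\<bar>) \<longlonglongrightarrow> \<bar>F u - S j u\<bar>"
      by (intro tendsto_intros conv u)
    moreover have "\<forall>l\<ge>j. \<bar>S l u - S j u\<bar> \<le> \<rho> j" using cb[OF u] inv by (smt (verit))
    ultimately show ?thesis using LIMSEQ_le_const2 by blast
  qed
  have "nb U F 1"
    unfolding nb_def
  proof
    fix u assume u: "u \<in> U"
    show "\<bar>F u\<bar> \<le> 1" using Fb[OF u, of 0] D0[OF u] by (simp add: S0 r0)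
  qed
  then have FZ: "F \<in> Z" using Zlim[of S F] conv inv by blast
  obtain g c where g: "nb T g c" "\<forall>u\<in>U. D g u = F u" using surj[OF FZ] \<open>nb U F 1\<close> by blast
  obtain j :: nat where j: "c \<le> real j" using real_arch_simple by blast
  have "nb T g (real j)" using nb_mono[OF g(1) j] .
  then have "\<not> nb U (\<lambda>u. S (Suc j) u - D g u) (E j)" using Pj[of j] by (simp add: P_def)
  then obtain u where u: "u \<in> U" "\<bar>S (Suc j) u - D g u\<bar> > E j" unfolding nb_def by auto
  have "\<bar>F u - S (Suc j) u\<bar> \<le> E j / 2" using Fb[OF u(1), of "Suc j"] rS[of j] by simp
  moreover have "E j > 0" using Pj[of j] by (simp add: P_def)
  moreover have "D g u = F u" using u g(2) by auto
  ultimately show False using u(2) by (simp add: abs_minus_commute)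
qed

lemma exact:
  assumes m: "m \<ge> 0" and r: "r > 0" and H: "\<forall>f\<in>Z. nb U f r \<longrightarrow> approx m f"
    and f: "f \<in> Z" "nb U f r"
  shows "\<exists>g. nb T g (2 * m) \<and> (\<forall>u\<in>U. D g u = f u)"
proof -
  have sc: "\<exists>g. nb T g (m * (1/2) ^ j) \<and> nb U (\<lambda>u. h u - D g u) e"
    if h: "h \<in> Z" "nb U h (r * (1/2) ^ j)" and e: "e > 0" for h j e
  proof -
    define h' where "h' = (\<lambda>u. 2 ^ j * h u)"
    have "h' \<in> Z" unfolding h'_def by (rule Zscale[OF h(1)])
    moreover have "nb U h' r" using h(2) unfolding nb_def h'_def
      by (auto simp: abs_mult power_one_over field_simps)
    ultimately have "approx m h'" using H by blast
    then obtain g' where g': "nb T g' m" "nb U (\<lambda>u. h' u - D g' u) (e * 2 ^ j)"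
      unfolding approx_def using e by (meson mult_pos_pos zero_less_numeral zero_less_power)
    define g where "g = (\<lambda>t. (1/2) ^ j * g' t)"
    have "nb T g (m * (1/2) ^ j)" using g'(1) unfolding nb_def g_def
      by (auto simp: abs_mult power_one_over field_simps)
    moreover have "nb U (\<lambda>u. h u - D g u) e"
      unfolding nb_def
    proof
      fix u assume u: "u \<in> U"
      have "D g u = (1/2) ^ j * D g' u" unfolding g_def by (rule Dscale[OF u])
      then have eq: "h u - D g u = (1/2) ^ j * (h' u - D g' u)" unfolding h'_def
        by (simp add: power_one_over field_simps)
      have "\<bar>h u - D g u\<bar> = (1/2) ^ j * \<bar>h' u - D g' u\<bar>" unfolding eq by (simp add: abs_mult)
      also have "\<dots> \<le> (1/2) ^ j * (e * 2 ^ j)"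
        by (rule mult_left_mono) (use g'(2) u in \<open>auto simp: nb_def\<close>)
      also have "\<dots> = e" by (simp add: power_one_over)
      finally show "\<bar>h u - D g u\<bar> \<le> e" .
    qed
    ultimately show ?thesis by blast
  qed
  have "\<forall>j R. \<exists>g. (R \<in> Z \<and> nb U R (r * (1/2) ^ j)) \<longrightarrow>
      nb T g (m * (1/2) ^ j) \<and> nb U (\<lambda>u. R u - D g u) (r * (1/2) ^ Suc j)"
    using sc r by (metis mult_pos_pos zero_less_divide_iff zero_less_numeral zero_less_one zero_less_power)
  then obtain GG where GG: "\<And>j R. R \<in> Z \<Longrightarrow> nb U R (r * (1/2) ^ j) \<Longrightarrow>
      nb T (GG j R) (m * (1/2) ^ j) \<and> nb U (\<lambda>u. R u - D (GG j R) u) (r * (1/2) ^ Suc j)"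
    by metis
  define Rs where "Rs = rec_nat f (\<lambda>j R. \<lambda>u. R u - D (GG j R) u)"
  have R0: "Rs 0 = f" and RS: "Rs (Suc j) = (\<lambda>u. Rs j u - D (GG j (Rs j)) u)" for j
    by (simp_all add: Rs_def)
  have inv: "Rs j \<in> Z \<and> nb U (Rs j) (r * (1/2) ^ j)" for j
  proof (induction j)
    case 0 then show ?case using f by (simp add: R0)
  next
    case (Suc j)
    have "Rs (Suc j) \<in> Z" unfolding RS
      by (rule Zsub) (use Suc GG[of "Rs j" j] ZD in blast)+
    then show ?case using GG[of "Rs j" j] Suc by (simp add: RS)
  qed
  define gs where "gs j = GG j (Rs j)" for j
  have gsb: "\<bar>gs j t\<bar> \<le> m * (1/2) ^ j" if "t \<in> T" for j t
    using GG[of "Rs j" j] inv[of j] that unfolding gs_def nb_def by auto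
  define g where "g t = (\<Sum>j. gs j t)" for t
  define P where "P N t = (\<Sum>j<N. gs j t)" for N t
  have DP: "D (P N) u = f u - Rs N u" if u: "u \<in> U" for N u
  proof (induction N)
    case 0
    have "P 0 = (\<lambda>t. 0)" by (simp add: P_def[abs_def])
    then show ?case using D0[OF u] by (simp add: R0)
  next
    case (Suc N)
    have "P (Suc N) = (\<lambda>t. P N t + gs N t)" by (simp add: P_def[abs_def])
    then show ?case using Dadd[OF u, of "P N" "gs N"] Suc by (simp add: RS gs_def)
  qed
  have tail: "\<bar>g t - P N t\<bar> \<le> 2 * m * (1/2) ^ N" if t: "t \<in> T" for t N
  proof -
    have gsum: "summable (\<lambda>j. m * (1/2::real) ^ j)" by (intro summable_mult summable_geometric) simp
    have sm: "summable (\<lambda>j. gs j t)"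
      by (rule summable_comparison_test'[OF gsum, of 0]) (use gsb t in auto)
    define b where "b j = m * (1/2) ^ N * (1/2::real) ^ j" for j
    have bs: "summable b" unfolding b_def by (intro summable_mult summable_geometric) simp
    have bv: "suminf b = 2 * m * (1/2) ^ N" unfolding b_def
      by (subst suminf_mult) (simp_all add: suminf_geometric)
    have sm2: "summable (\<lambda>j. gs (j + N) t)" using sm by (rule summable_ignore_initial_segment)
    have bb: "\<bar>gs (j + N) t\<bar> \<le> b j" for j using gsb[OF t, of "j + N"] by (simp add: b_def power_add mult_ac)
    have "g t - P N t = (\<Sum>j. gs (j + N) t)"
      unfolding g_def P_def using suminf_split_initial_segment[OF sm, of N] by simp
    moreover have "(\<Sum>j. gs (j + N) t) \<le> suminf b" by (rule suminf_le) (use bb sm2 bs in \<open>auto simp: abs_le_iff\<close>)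
    moreover have "- suminf b \<le> (\<Sum>j. gs (j + N) t)"
    proof -
      have "(\<Sum>j. - b j) \<le> (\<Sum>j. gs (j + N) t)"
      proof (rule suminf_le)
        show "- b n \<le> gs (n + N) t" for n using bb[of n] by (simp add: abs_le_iff)
      qed (use sm2 bs summable_minus in auto)
      then show ?thesis using suminf_minus[OF bs] by simp
    qed
    ultimately show ?thesis using bv by (simp add: abs_le_iff)
  qed
  have "nb T g (2 * m)" unfolding nb_def
  proof
    fix t assume "t \<in> T"
    then show "\<bar>g t\<bar> \<le> 2 * m" using tail[of t 0] by (simp add: P_def)
  qed
  moreover have "D g u = f u" if u: "u \<in> U" for u
  proof -
    have "\<bar>D g u - f u\<bar> \<le> (K * (2 * m) + r) * (1/2) ^ N" for N
    proof -
      have "D g u - f u = D (\<lambda>t. g t - P N t) u - Rs N u" using Dsub[OF u, of g "P N"] DP[OF u, of N] by simp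
      moreover have "\<bar>D (\<lambda>t. g t - P N t) u\<bar> \<le> K * (2 * m * (1/2) ^ N)"
        by (rule bnd[OF _ u]) (use tail in \<open>auto simp: nb_def\<close>)
      moreover have "\<bar>Rs N u\<bar> \<le> r * (1/2) ^ N" using inv[of N] u by (auto simp: nb_def)
      ultimately show ?thesis by (simp add: algebra_simps abs_le_iff)
    qed
    then have "D g u - f u = 0" by (rule small_zero)
    then show ?thesis by simp
  qed
  ultimately show ?thesis by blast
qed

lemma ubc: "\<exists>C\<ge>0. \<forall>f\<in>Z. \<forall>c\<ge>0. nb U f c \<longrightarrow> (\<exists>g. nb T g (C * c) \<and> (\<forall>u\<in>U. D g u = f u))"
proof -
  obtain m r where mr: "m \<ge> 0" "r > 0" "\<forall>f\<in>Z. nb U f r \<longrightarrow> approx m f" using baire by blast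
  show ?thesis
  proof (intro exI[of _ "2 * m / r"] conjI ballI allI impI)
    show "0 \<le> 2 * m / r" using mr by simp
    fix f c assume f: "f \<in> Z" and c: "0 \<le> c" and fc: "nb U f c"
    show "\<exists>g. nb T g (2 * m / r * c) \<and> (\<forall>u\<in>U. D g u = f u)"
    proof (cases "c = 0")
      case True
      then have "\<forall>u\<in>U. f u = 0" using fc by (auto simp: nb_def)
      then show ?thesis using D0 True by (intro exI[of _ "\<lambda>t. 0"]) (auto simp: nb_def)
    next
      case False
      then have c: "c > 0" using c by simp
      define f' where "f' = (\<lambda>u. (r / c) * f u)"
      have "f' \<in> Z" unfolding f'_def by (rule Zscale[OF f])
      moreover have "nb U f' r" using fc c mr(2) unfolding nb_def f'_def
        by (auto simp: abs_mult field_simps)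
      ultimately obtain g' where g': "nb T g' (2 * m)" "\<forall>u\<in>U. D g' u = f' u"
        using exact[OF mr] by blast
      define g where "g = (\<lambda>t. (c / r) * g' t)"
      have "nb T g (2 * m / r * c)" using g'(1) c mr(2) unfolding nb_def g_def
        by (auto simp: abs_mult field_simps)
      moreover have "\<forall>u\<in>U. D g u = f u"
      proof
        fix u assume u: "u \<in> U"
        have "D g u = (c / r) * D g' u" unfolding g_def by (rule Dscale[OF u])
        also have "\<dots> = (c / r) * ((r / c) * f u)" using g'(2) u by (simp add: f'_def)
        also have "\<dots> = f u" using c mr(2) by simp
        finally show "D g u = f u" .
      qed
      ultimately show ?thesis by blast
    qed
  qed
qed

end

lemma sum_lin: "(\<Sum>i\<in>A. c i * (a * p i + b * q i)) = a * (\<Sum>i\<in>A. c i * p i) + b * (\<Sum>i\<in>A. (c i :: real) * q i)"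
  unfolding sum_distrib_left sum.distrib[symmetric] by (rule sum.cong) (simp_all add: algebra_simps)

lemma cob_lin: "coboundary G j (\<lambda>t. a * g t + b * h t) xs = a * coboundary G j g xs + b * coboundary G j h xs"
  unfolding coboundary_def sum_lin by (simp add: algebra_simps)

lemma fc_tuples:
  assumes "monoid G" "xs \<in> tuples G (j + 1)" "i \<le> j + 1"
  shows "fc G i xs \<in> tuples G j"
  using assms fc_length[of i xs G] fc_carrier[OF assms(1), of xs i] by (auto simp: tuples_def)

lemma cob_bnd:
  assumes G: "monoid G" and g: "nb (tuples G j) g c" and xs: "xs \<in> tuples G (j + 1)"
  shows "\<bar>coboundary G j g xs\<bar> \<le> (real j + 2) * c"
proof -
  have l: "length xs = j + 1" using xs by (simp add: tuples_def)
  have "\<bar>coboundary G j g xs\<bar> \<le> (\<Sum>i\<le>j+1. \<bar>(-1) ^ i * g (fc G i xs)\<bar>)"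
    unfolding cob_sum[OF l] by (rule sum_abs)
  also have "\<dots> \<le> (\<Sum>i\<le>j+1. c)"
  proof (rule sum_mono)
    fix i assume "i \<in> {..j+1}"
    then have "fc G i xs \<in> tuples G j" using fc_tuples[OF G xs] by simp
    then show "\<bar>(-1) ^ i * g (fc G i xs)\<bar> \<le> c" using g by (simp add: nb_def abs_mult)
  qed
  also have "\<dots> = (real j + 2) * c" by simp
  finally show ?thesis .
qed

lemma cob_local:
  assumes G: "monoid G" and eq: "\<forall>t\<in>tuples G j. g t = g' t" and xs: "xs \<in> tuples G (j + 1)"
  shows "coboundary G j g xs = coboundary G j g' xs"
proof -
  have l: "length xs = j + 1" using xs by (simp add: tuples_def)
  show ?thesis unfolding cob_sum[OF l]
    by (rule sum.cong) (use fc_tuples[OF G xs] eq in auto)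
qed

lemma cob_tendsto:
  assumes G: "monoid G" and xs: "xs \<in> tuples G (j + 1)"
    and lim: "\<forall>u\<in>tuples G j. (\<lambda>n. fs n u) \<longlonglongrightarrow> f u"
  shows "(\<lambda>n. coboundary G j (fs n) xs) \<longlonglongrightarrow> coboundary G j f xs"
proof -
  have l: "length xs = j + 1" using xs by (simp add: tuples_def)
  show ?thesis unfolding cob_sum[OF l]
    by (intro tendsto_intros) (use fc_tuples[OF G xs] lim in auto)
qed

definition UBC :: "('a, 'b) monoid_scheme \<Rightarrow> nat \<Rightarrow> real \<Rightarrow> bool" where
  "UBC G k C \<longleftrightarrow> (\<forall>f c. c \<ge> 0 \<longrightarrow> nb (tuples G k) f c \<longrightarrow> (\<forall>xs\<in>tuples G (k + 1). coboundary G k f xs = 0)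
     \<longrightarrow> (\<exists>g. nb (tuples G (k - 1)) g (C * c) \<and> (\<forall>xs\<in>tuples G k. coboundary G (k - 1) g xs = f xs)))"

lemma group_ubc:
  assumes G: "group G" and k: "k \<ge> 1" and V: "bounded_cohomology_vanishes G k"
  shows "\<exists>C\<ge>0. UBC G k C"
proof -
  have M: "monoid G" using G by (simp add: group.is_monoid)
  have kk: "k - 1 + 1 = k" using k by simp
  define Z where "Z = {f. bcochain G k f \<and> (\<forall>xs\<in>tuples G (k + 1). coboundary G k f xs = 0)}"
  interpret om "coboundary G (k - 1)" "tuples G (k - 1)" "tuples G k" Z "real (k - 1) + 2"
  proof
    show "coboundary G (k - 1) (\<lambda>t. a * g t + b * h t) u = a * coboundary G (k - 1) g u + b * coboundary G (k - 1) h u"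
      for g h a b u by (rule cob_lin)
    show "\<bar>coboundary G (k - 1) g u\<bar> \<le> (real (k - 1) + 2) * c" if "nb (tuples G (k - 1)) g c" "u \<in> tuples G k" for g c u
      by (rule cob_bnd[OF M that(1)]) (use that(2) kk in simp)
    show "0 \<le> real (k - 1) + 2" by simp
    show "(\<lambda>u. a * f u + b * h u) \<in> Z" if "f \<in> Z" "h \<in> Z" for f h a b
    proof -
      have "bcochain G k f" "bcochain G k h" using that by (auto simp: Z_def)
      then obtain c1 c2 where "\<forall>xs\<in>tuples G k. \<bar>f xs\<bar> \<le> c1" "\<forall>xs\<in>tuples G k. \<bar>h xs\<bar> \<le> c2"
        unfolding bcochain_def by blast
      then have "\<forall>xs\<in>tuples G k. \<bar>a * f xs + b * h xs\<bar> \<le> \<bar>a\<bar> * c1 + \<bar>b\<bar> * c2"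
      proof (intro ballI)
        fix xs assume "xs \<in> tuples G k"
        then have "\<bar>f xs\<bar> \<le> c1" "\<bar>h xs\<bar> \<le> c2" using \<open>\<forall>xs\<in>tuples G k. \<bar>f xs\<bar> \<le> c1\<close> \<open>\<forall>xs\<in>tuples G k. \<bar>h xs\<bar> \<le> c2\<close> by auto
        then have "\<bar>a\<bar> * \<bar>f xs\<bar> \<le> \<bar>a\<bar> * c1" "\<bar>b\<bar> * \<bar>h xs\<bar> \<le> \<bar>b\<bar> * c2"
          by (simp_all add: mult_left_mono)
        moreover have "\<bar>a * f xs + b * h xs\<bar> \<le> \<bar>a\<bar> * \<bar>f xs\<bar> + \<bar>b\<bar> * \<bar>h xs\<bar>"
          by (metis abs_mult abs_triangle_ineq)
        ultimately show "\<bar>a * f xs + b * h xs\<bar> \<le> \<bar>a\<bar> * c1 + \<bar>b\<bar> * c2" by linarith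
      qed
      then show ?thesis using that by (auto simp: Z_def bcochain_def cob_lin)
    qed
    show "coboundary G (k - 1) g \<in> Z" if "nb (tuples G (k - 1)) g c" for g c
    proof -
      have "bcochain G k (coboundary G (k - 1) g)"
        unfolding bcochain_def using cob_bnd[OF M that] kk by auto
      moreover have "coboundary G k (coboundary G (k - 1) g) xs = 0" if "xs \<in> tuples G (k + 1)" for xs
        using cob_cob[OF M, of xs "k - 1" g] that kk by (simp add: tuples_def)
      ultimately show ?thesis by (simp add: Z_def)
    qed
    show "f \<in> Z" if "\<forall>j. fs j \<in> Z" "\<forall>u\<in>tuples G k. (\<lambda>j. fs j u) \<longlonglongrightarrow> f u" "\<exists>c. nb (tuples G k) f c" for fs f
    proof -
      have "bcochain G k f" using that(3) by (auto simp: bcochain_def nb_def)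
      moreover have "coboundary G k f xs = 0" if xs: "xs \<in> tuples G (k + 1)" for xs
      proof -
        have "(\<lambda>n. coboundary G k (fs n) xs) \<longlonglongrightarrow> coboundary G k f xs"
          by (rule cob_tendsto[OF M xs]) (use \<open>\<forall>u\<in>tuples G k. (\<lambda>j. fs j u) \<longlonglongrightarrow> f u\<close> in simp)
        moreover have "(\<lambda>n. coboundary G k (fs n) xs) = (\<lambda>n. 0)"
          using \<open>\<forall>j. fs j \<in> Z\<close> xs by (auto simp: Z_def)
        ultimately have "(\<lambda>n. 0::real) \<longlonglongrightarrow> coboundary G k f xs" by simp
        from LIMSEQ_unique[OF this tendsto_const] show ?thesis by simp
      qed
      ultimately show ?thesis by (simp add: Z_def)
    qed
    show "\<exists>g c. nb (tuples G (k - 1)) g c \<and> (\<forall>u\<in>tuples G k. coboundary G (k - 1) g u = f u)"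
      if "f \<in> Z" "\<exists>c. nb (tuples G k) f c" for f
    proof -
      have fz: "bcochain G k f \<and> (\<forall>xs\<in>tuples G (k + 1). coboundary G k f xs = 0)" using that(1) by (simp add: Z_def)
      obtain g where "bcochain G (k - 1) g" "\<forall>xs\<in>tuples G k. f xs = coboundary G (k - 1) g xs"
        using V[unfolded bounded_cohomology_vanishes_def, rule_format, OF fz] by blast
      then show ?thesis unfolding bcochain_def nb_def by auto
    qed
  qed
  obtain C where C: "C \<ge> 0" "\<forall>f\<in>Z. \<forall>c\<ge>0. nb (tuples G k) f c \<longrightarrow>
      (\<exists>g. nb (tuples G (k - 1)) g (C * c) \<and> (\<forall>u\<in>tuples G k. coboundary G (k - 1) g u = f u))"
    using ubc by blast
  have "UBC G k C" unfolding UBC_def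
  proof (intro allI impI)
    fix f c assume "0 \<le> c" "nb (tuples G k) f c" "\<forall>xs\<in>tuples G (k + 1). coboundary G k f xs = 0"
    then have "f \<in> Z" by (auto simp: Z_def bcochain_def nb_def)
    then show "\<exists>g. nb (tuples G (k - 1)) g (C * c) \<and> (\<forall>xs\<in>tuples G k. coboundary G (k - 1) g xs = f xs)"
      using C(2) \<open>0 \<le> c\<close> \<open>nb (tuples G k) f c\<close> by blast
  qed
  then show ?thesis using C(1) by blast
qed

lemma fc_map:
  assumes h: "\<phi> \<in> hom G H" and xs: "set xs \<subseteq> carrier G" and i: "i \<le> length xs"
  shows "map \<phi> (fc G i xs) = fc H i (map \<phi> xs)"
proof -
  have c: "\<And>q. q < length xs \<Longrightarrow> xs ! q \<in> carrier G" using xs nth_mem by blast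
  show ?thesis
  proof (cases "i = 0 \<or> i = length xs")
    case True then show ?thesis by (auto simp: fc_def map_tl map_butlast)
  next
    case False
    then have "i - 1 < length xs" "i < length xs" using i by auto
    then show ?thesis using False c hom_mult[OF h]
      by (simp add: fc_def take_map drop_map)
  qed
qed

lemma cob_map:
  assumes h: "\<phi> \<in> hom G H" and xs: "xs \<in> tuples G (k + 1)"
  shows "coboundary G k (\<lambda>ys. F (map \<phi> ys)) xs = coboundary H k F (map \<phi> xs)"
proof -
  have l: "length xs = k + 1" and s: "set xs \<subseteq> carrier G" using xs by (auto simp: tuples_def)
  have l2: "length (map \<phi> xs) = k + 1" using l by simp
  show ?thesis unfolding cob_sum[OF l] cob_sum[OF l2]
    by (rule sum.cong) (use fc_map[OF h s] l in auto)
qed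

lemma map_tuples: "\<phi> \<in> hom G H \<Longrightarrow> xs \<in> tuples G j \<Longrightarrow> map \<phi> xs \<in> tuples H j"
  by (auto simp: tuples_def hom_in_carrier)

lemma ubc_transfer:
  assumes A: "group A" and iso: "\<phi> \<in> iso A B" and U: "UBC B k C" and k: "k \<ge> 1"
  shows "UBC A k C"
proof -
  define \<psi> where "\<psi> = inv_into (carrier A) \<phi>"
  have psi: "\<psi> \<in> hom B A" using group.iso_set_sym[OF A iso] iso_imp_homomorphism unfolding \<psi>_def by blast
  have phi: "\<phi> \<in> hom A B" using iso iso_imp_homomorphism by blast
  have inj: "inj_on \<phi> (carrier A)" using iso by (auto simp: iso_def bij_betw_def)
  have pp: "map \<psi> (map \<phi> xs) = xs" if "xs \<in> tuples A j" for xs j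
    using that inj unfolding \<psi>_def tuples_def by (auto intro!: map_idI inv_into_f_f)
  have kk: "k - 1 + 1 = k" using k by simp
  show ?thesis unfolding UBC_def
  proof (intro allI impI)
    fix f c assume c: "0 \<le> c" and fb: "nb (tuples A k) f c"
      and fz: "\<forall>xs\<in>tuples A (k + 1). coboundary A k f xs = 0"
    define f' where "f' ys = f (map \<psi> ys)" for ys
    have "nb (tuples B k) f' c" using fb map_tuples[OF psi] unfolding nb_def f'_def by blast
    moreover have "\<forall>ys\<in>tuples B (k + 1). coboundary B k f' ys = 0"
    proof
      fix ys assume ys: "ys \<in> tuples B (k + 1)"
      have "coboundary B k f' ys = coboundary A k f (map \<psi> ys)"
        unfolding f'_def[abs_def] by (rule cob_map[OF psi ys])
      also have "\<dots> = 0" using fz map_tuples[OF psi ys] by blast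
      finally show "coboundary B k f' ys = 0" .
    qed
    ultimately obtain g' where g': "nb (tuples B (k - 1)) g' (C * c)"
        "\<forall>xs\<in>tuples B k. coboundary B (k - 1) g' xs = f' xs"
      using U c unfolding UBC_def by blast
    define g where "g xs = g' (map \<phi> xs)" for xs
    have "nb (tuples A (k - 1)) g (C * c)" using g'(1) map_tuples[OF phi] unfolding nb_def g_def by blast
    moreover have "\<forall>xs\<in>tuples A k. coboundary A (k - 1) g xs = f xs"
    proof
      fix xs assume xs: "xs \<in> tuples A k"
      then have xs': "xs \<in> tuples A (k - 1 + 1)" using kk by simp
      have "coboundary A (k - 1) g xs = coboundary B (k - 1) g' (map \<phi> xs)"
        unfolding g_def[abs_def] by (rule cob_map[OF phi xs'])
      also have "\<dots> = f' (map \<phi> xs)" using g'(2) map_tuples[OF phi xs] by blast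
      also have "\<dots> = f xs" unfolding f'_def using pp[OF xs] by simp
      finally show "coboundary A (k - 1) g xs = f xs" .
    qed
    ultimately show "\<exists>g. nb (tuples A (k - 1)) g (C * c) \<and> (\<forall>xs\<in>tuples A k. coboundary A (k - 1) g xs = f xs)"
      by blast
  qed
qed

lemma fin_dir:
  assumes "I \<noteq> {}" "\<And>i j. i \<in> I \<Longrightarrow> j \<in> I \<Longrightarrow> \<exists>k \<in> I. H i \<subseteq> H k \<and> H j \<subseteq> H k"
    and "set xs \<subseteq> (\<Union>i \<in> I. H i)"
  shows "\<exists>i\<in>I. set xs \<subseteq> H i"
  using assms(3)
proof (induction xs)
  case Nil then show ?case using assms(1) by auto
next
  case (Cons x xs)
  then obtain a b where "a \<in> I" "x \<in> H a" "b \<in> I" "set xs \<subseteq> H b" by auto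
  then show ?case using assms(2)[of a b] by auto
qed

theorem corollary4p14:
  fixes \<Gamma> :: "('a, 'b) monoid_scheme" and I :: "'i set" and H :: "'i \<Rightarrow> 'a set" and n :: nat
  assumes "n \<ge> 1"
    and "group \<Gamma>"
    and "\<And>i. i \<in> I \<Longrightarrow> subgroup (H i) \<Gamma>"
    and "\<And>i j. i \<in> I \<Longrightarrow> j \<in> I \<Longrightarrow> \<exists>k \<in> I. H i \<subseteq> H k \<and> H j \<subseteq> H k"
    and "(\<Union>i \<in> I. H i) = carrier \<Gamma>"
    and "\<And>i j. i \<in> I \<Longrightarrow> j \<in> I \<Longrightarrow> \<Gamma>\<lparr>carrier := H i\<rparr> \<cong> \<Gamma>\<lparr>carrier := H j\<rparr>"
    and "\<And>i. i \<in> I \<Longrightarrow> boundedly_acyclic (\<Gamma>\<lparr>carrier := H i\<rparr>) n"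
  shows "boundedly_acyclic \<Gamma> n"
proof -
  note dir = assms(4)
  have grp: "group (\<Gamma>\<lparr>carrier := H i\<rparr>)" if "i \<in> I" for i
    using subgroup.subgroup_is_group[OF assms(3)[OF that] assms(2)] .
  have mon: "monoid (\<Gamma>\<lparr>carrier := H i\<rparr>)" if "i \<in> I" for i using grp[OF that] by (simp add: group.is_monoid)
  have Hc: "H i \<subseteq> carrier \<Gamma>" if "i \<in> I" for i using assms(3)[OF that] by (simp add: subgroup.subset)
  have Ine: "I \<noteq> {}" using assms(5) monoid.one_closed[OF group.is_monoid[OF assms(2)]] by auto
  then obtain i0 where i0: "i0 \<in> I" by blast
  have cobH: "coboundary (\<Gamma>\<lparr>carrier := X\<rparr>) j = coboundary \<Gamma> j" for X j
    by (simp add: coboundary_def[abs_def])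
  have tupH: "tuples (\<Gamma>\<lparr>carrier := X\<rparr>) j = {xs. length xs = j \<and> set xs \<subseteq> X}" for X j
    by (simp add: tuples_def)
  have tupsub: "tuples (\<Gamma>\<lparr>carrier := H i\<rparr>) j \<subseteq> tuples \<Gamma> j" if "i \<in> I" for i j
    using Hc[OF that] by (auto simp: tupH tuples_def)
  show ?thesis unfolding boundedly_acyclic_def
  proof
    fix k assume kI: "k \<in> {1..n}"
    then have k: "k \<ge> 1" by simp
    have kk: "k - 1 + 1 = k" using k by simp
    have "bounded_cohomology_vanishes (\<Gamma>\<lparr>carrier := H i0\<rparr>) k"
      using assms(7)[OF i0] kI unfolding boundedly_acyclic_def by blast
    then obtain C where C: "C \<ge> 0" "UBC (\<Gamma>\<lparr>carrier := H i0\<rparr>) k C"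
      using group_ubc[OF grp[OF i0] k] by blast
    have Ui: "UBC (\<Gamma>\<lparr>carrier := H i\<rparr>) k C" if i: "i \<in> I" for i
    proof -
      obtain \<phi> where "\<phi> \<in> iso (\<Gamma>\<lparr>carrier := H i\<rparr>) (\<Gamma>\<lparr>carrier := H i0\<rparr>)"
        using assms(6)[OF i i0] unfolding is_iso_def by blast
      from ubc_transfer[OF grp[OF i] this C(2) k] show ?thesis .
    qed
    show "bounded_cohomology_vanishes \<Gamma> k"
      unfolding bounded_cohomology_vanishes_def
    proof (intro allI impI)
      fix f assume fa: "bcochain \<Gamma> k f \<and> (\<forall>xs\<in>tuples \<Gamma> (k + 1). coboundary \<Gamma> k f xs = 0)"
      obtain c0 where c0: "\<forall>xs\<in>tuples \<Gamma> k. \<bar>f xs\<bar> \<le> c0" using fa unfolding bcochain_def by blast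
      define c where "c = max c0 0"
      have c: "c \<ge> 0" "nb (tuples \<Gamma> k) f c" using c0 unfolding c_def nb_def by auto
      define Mb where "Mb = C * c"
      have Mb: "Mb \<ge> 0" using C(1) c(1) by (simp add: Mb_def)
      have "\<forall>i\<in>I. \<exists>g. nb (tuples (\<Gamma>\<lparr>carrier := H i\<rparr>) (k - 1)) g Mb
          \<and> (\<forall>xs\<in>tuples (\<Gamma>\<lparr>carrier := H i\<rparr>) k. coboundary \<Gamma> (k - 1) g xs = f xs)"
      proof
        fix i assume i: "i \<in> I"
        have A: "nb (tuples (\<Gamma>\<lparr>carrier := H i\<rparr>) k) f c" using c(2) tupsub[OF i] unfolding nb_def by blast
        have B: "\<And>xs. xs \<in> tuples (\<Gamma>\<lparr>carrier := H i\<rparr>) (k + 1) \<Longrightarrow> coboundary \<Gamma> k f xs = 0"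
          using fa tupsub[OF i] by blast
        from Ui[OF i, unfolded UBC_def cobH, rule_format, OF c(1) A B]
        show "\<exists>g. nb (tuples (\<Gamma>\<lparr>carrier := H i\<rparr>) (k - 1)) g Mb
          \<and> (\<forall>xs\<in>tuples (\<Gamma>\<lparr>carrier := H i\<rparr>) k. coboundary \<Gamma> (k - 1) g xs = f xs)"
          unfolding Mb_def .
      qed
      from bchoice[OF this] obtain gg where gg0: "\<forall>i\<in>I. nb (tuples (\<Gamma>\<lparr>carrier := H i\<rparr>) (k - 1)) (gg i) Mb
          \<and> (\<forall>xs\<in>tuples (\<Gamma>\<lparr>carrier := H i\<rparr>) k. coboundary \<Gamma> (k - 1) (gg i) xs = f xs)" ..
      have gg: "nb (tuples (\<Gamma>\<lparr>carrier := H i\<rparr>) (k - 1)) (gg i) Mb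
          \<and> (\<forall>xs\<in>tuples (\<Gamma>\<lparr>carrier := H i\<rparr>) k. coboundary \<Gamma> (k - 1) (gg i) xs = f xs)" if "i \<in> I" for i
        using gg0 that by (rule bspec)
      define gc where "gc i t = (if t \<in> tuples (\<Gamma>\<lparr>carrier := H i\<rparr>) (k - 1) then gg i t else 0)" for i t
      have gcb: "\<bar>gc i t\<bar> \<le> Mb" if "i \<in> I" for i t
        using gg[OF that] Mb unfolding gc_def nb_def by auto
      have gcc: "coboundary \<Gamma> (k - 1) (gc i) xs = f xs"
        if i: "i \<in> I" and xs: "xs \<in> tuples (\<Gamma>\<lparr>carrier := H i\<rparr>) k" for i xs
      proof -
        have xs': "xs \<in> tuples (\<Gamma>\<lparr>carrier := H i\<rparr>) (k - 1 + 1)" using xs kk by simp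
        have "coboundary (\<Gamma>\<lparr>carrier := H i\<rparr>) (k - 1) (gc i) xs = coboundary (\<Gamma>\<lparr>carrier := H i\<rparr>) (k - 1) (gg i) xs"
          by (rule cob_local[OF mon[OF i] _ xs']) (simp add: gc_def)
        then show ?thesis using gg[OF i] xs unfolding cobH by simp
      qed
      define FI where "FI = (INF i\<in>I. principal {j\<in>I. H i \<subseteq> H j})"
      have evI: "eventually (\<lambda>j. j \<in> I \<and> H i \<subseteq> H j) FI" if "i \<in> I" for i
      proof -
        have "FI \<le> principal {j\<in>I. H i \<subseteq> H j}" unfolding FI_def using that by (rule INF_lower)
        then show ?thesis by (simp add: le_principal)
      qed
      have FInb: "FI \<noteq> bot"
      proof -
        have "FI = bot \<longleftrightarrow> (\<exists>i\<in>I. principal {j\<in>I. H i \<subseteq> H j} = bot)"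
          unfolding FI_def
        proof (rule INF_filter_bot_base)
          fix i j assume "i \<in> I" "j \<in> I"
          then obtain l where "l \<in> I" "H i \<subseteq> H l" "H j \<subseteq> H l" using dir by blast
          then show "\<exists>l\<in>I. principal {m\<in>I. H l \<subseteq> H m} \<le> inf (principal {m\<in>I. H i \<subseteq> H m}) (principal {m\<in>I. H j \<subseteq> H m})"
            by (intro bexI[of _ l]) auto
        qed
        moreover have "principal {j\<in>I. H i \<subseteq> H j} \<noteq> bot" if "i \<in> I" for i
        proof -
          have "{j\<in>I. H i \<subseteq> H j} \<noteq> {}" using that by auto
          then show ?thesis by (simp add: principal_eq_bot_iff)
        qed
        ultimately show ?thesis by blast
      qed
      define F where "F = filtermap gc FI"
      define K0 where "K0 = PiE UNIV (\<lambda>_::'a list. {-Mb..Mb})"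
      have cK0: "compact K0"
      proof -
        have "compactin (product_topology (\<lambda>_. euclidean) UNIV) K0"
          unfolding K0_def by (simp add: compactin_PiE)
        then show ?thesis by (metis compactin_euclidean_iff euclidean_product_topology)
      qed
      have Fnb: "F \<noteq> bot" using FInb by (simp add: F_def filtermap_bot_iff)
      have "eventually (\<lambda>x. x \<in> K0) F"
        unfolding F_def eventually_filtermap
      proof (rule eventually_mono[OF evI[OF i0]])
        fix j assume "j \<in> I \<and> H i0 \<subseteq> H j"
        then have "\<bar>gc j t\<bar> \<le> Mb" for t using gcb by blast
        then have "- Mb \<le> gc j t \<and> gc j t \<le> Mb" for t by (metis abs_le_D1 abs_le_D2 minus_le_iff)
        then show "gc j \<in> K0" unfolding K0_def by auto
      qed
      from cK0[unfolded compact_filter, rule_format, OF Fnb this]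
      obtain g where g: "g \<in> K0" "inf (nhds g) F \<noteq> bot" by blast
      show "\<exists>g. bcochain \<Gamma> (k - 1) g \<and> (\<forall>xs\<in>tuples \<Gamma> k. f xs = coboundary \<Gamma> (k - 1) g xs)"
      proof (rule exI[of _ g], intro conjI ballI)
        have "\<forall>t. \<bar>g t\<bar> \<le> Mb"
        proof
          fix t
          have "g t \<in> {-Mb..Mb}" using g(1) unfolding K0_def by (rule PiE_mem) simp
          then have "- Mb \<le> g t" "g t \<le> Mb" by auto
          then show "\<bar>g t\<bar> \<le> Mb" by (simp add: abs_le_iff)
        qed
        then show "bcochain \<Gamma> (k - 1) g" unfolding bcochain_def by blast
        fix xs assume xs: "xs \<in> tuples \<Gamma> k"
        obtain i where i: "i \<in> I" "set xs \<subseteq> H i"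
          using fin_dir[OF Ine dir, of xs] xs assms(5) by (auto simp: tuples_def)
        have "length xs = k" using xs unfolding tuples_def by blast
        then have lxs: "length xs = k - 1 + 1" unfolding kk .
        define \<Phi> where "\<Phi> h = coboundary \<Gamma> (k - 1) h xs" for h
        have \<Phi>eq: "\<Phi> = (\<lambda>h. \<Sum>p\<le>k - 1 + 1. (-1) ^ p * h (fc \<Gamma> p xs))"
          unfolding \<Phi>_def[abs_def] cob_sum[OF lxs] ..
        have "continuous_on UNIV \<Phi>" unfolding \<Phi>eq
          by (intro continuous_intros continuous_on_product_coordinates)
        then have "(\<Phi> \<longlongrightarrow> \<Phi> g) (at g within UNIV)"
          unfolding continuous_on_def by (rule bspec[OF _ UNIV_I])
        then have "(\<Phi> \<longlongrightarrow> \<Phi> g) (nhds g)" by (rule tendsto_at_iff_tendsto_nhds[THEN iffD1])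
        then have T1: "(\<Phi> \<longlongrightarrow> \<Phi> g) (inf (nhds g) F)" by (rule tendsto_mono[OF inf_le1])
        have "eventually (\<lambda>h. \<Phi> h = f xs) F"
          unfolding F_def eventually_filtermap
        proof (rule eventually_mono[OF evI[OF i(1)]])
          fix j assume j: "j \<in> I \<and> H i \<subseteq> H j"
          then have "xs \<in> tuples (\<Gamma>\<lparr>carrier := H j\<rparr>) k" using xs i by (auto simp: tuples_def)
          then show "\<Phi> (gc j) = f xs" unfolding \<Phi>_def using gcc[of j xs] j by simp
        qed
        then have "eventually (\<lambda>h. \<Phi> h = f xs) (inf (nhds g) F)"
          by (rule filter_leD[OF inf_le2])
        then have T2: "(\<Phi> \<longlongrightarrow> f xs) (inf (nhds g) F)" by (rule tendsto_eventually)
        from tendsto_unique[OF g(2) T1 T2] show "f xs = coboundary \<Gamma> (k - 1) g xs"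
          unfolding \<Phi>_def by simp
      qed
    qed
  qed
qed

end
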